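(* Let $p>2$ be a prime. Define the sequence $(x_1,\ldots,x_p)$ of elements of $\mathbb{F}_p$ by $x_1=0$, and $x_{2j}=j$, $x_{2j+1}=p-j$ for $1\le j\le (p-1)/2$ (so the sequence is $(0,1,p-1,2,p-2,\ldots)$). Then this sequence is a sequencing of the sharply $2$-transitive action of the affine group $\mathrm{Aff}(\mathbb{F}_p)=\{x\mapsto ax+b : a\in\mathbb{F}_p^*,\ b\in\mathbb{F}_p\}$ on $\mathbb{F}_p$. In particular, a $(p,3)$-permutation design exists for every odd prime $p$.
   Context: For a group $G$ acting sharply $k$-transitively on an $n$-element set $X$ (for any two ordered $k$-tuples of distinct elements there is exactly one $g\in G$ mapping the first to the second coordinatewise), a sequencing of $X$ is an enumeration $(x_1,\ldots,x_n)$ of all elements of $X$ such that the $n-k$ tuples $(x_1,\ldots,x_{k+1}),\ldots,(x_{n-k},\ldots,x_n)$ lie in pairwise distinct orbits of $G$ acting coordinatewise on ordered $(k+1)$-tuples of distinct elements of $X$. An $(n,t)$-permutation design is a set of $n(n-1)\cdots(n-t+2)$ permutations of an $n$-set (each written as a sequence of all $n$ elements) such that every ordered $t$-tuple of distinct elements occurs exactly once as a contiguous subsequence of one of the permutations. *)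

theory Defs
  imports "HOL-Computational_Algebra.Primes"
begin

text \<open>The prime field F_p is modelled by the residues {0..<p} (nat) with arithmetic mod p.\<close>

definition aff_group :: "nat \<Rightarrow> (nat \<Rightarrow> nat) set" where
  "aff_group p = {(\<lambda>x. (a * x + b) mod p) | a b. a \<in> {1..<p} \<and> b < p}"

definition same_orbit :: "('a \<Rightarrow> 'a) set \<Rightarrow> 'a list \<Rightarrow> 'a list \<Rightarrow> bool" where
  "same_orbit G u v \<longleftrightarrow> (\<exists>g\<in>G. map g u = v)"

definition sequencing :: "('a \<Rightarrow> 'a) set \<Rightarrow> 'a set \<Rightarrow> nat \<Rightarrow> 'a list \<Rightarrow> bool" where
  "sequencing G X k xs \<longleftrightarrow>
     distinct xs \<and> set xs = X \<and>
     (\<forall>i < length xs - k. \<forall>j < length xs - k. i \<noteq> j \<longrightarrow>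
        \<not> same_orbit G (take (k+1) (drop i xs)) (take (k+1) (drop j xs)))"

definition zigzag_seq :: "nat \<Rightarrow> nat list" where
  "zigzag_seq p = 0 # concat (map (\<lambda>j. [j, p - j]) [1..<(p - 1) div 2 + 1])"

definition perm_design :: "nat \<Rightarrow> nat \<Rightarrow> 'a set \<Rightarrow> 'a list set \<Rightarrow> bool" where
  "perm_design n t X P \<longleftrightarrow>
     finite X \<and> card X = n \<and> finite P \<and> card P = (\<Prod>i<t - 1. n - i) \<and>
     (\<forall>\<pi>\<in>P. distinct \<pi> \<and> set \<pi> = X) \<and>
     (\<forall>u. distinct u \<and> length u = t \<and> set u \<subseteq> X \<longrightarrow>
        card {(\<pi>, i). \<pi> \<in> P \<and> i + t \<le> length \<pi> \<and> take t (drop i \<pi>) = u} = 1)"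

end

theory Submission
  imports Defs
begin


definition zz :: "nat \<Rightarrow> nat \<Rightarrow> nat" where
  "zz p i = (if i = 0 then 0 else if odd i then (i+1) div 2 else p - i div 2)"

lemma zz_list: "0 # concat (map (\<lambda>j. [j, p - j]) [1..<m + 1]) = map (zz p) [0..<2*m+1]"
proof (induction m)
  case 0
  then show ?case by (simp add: zz_def)
next
  case (Suc m)
  have e: "[0..<2*Suc m+1] = [0..<2*m+1] @ [2*m+1, 2*m+2]"
    by (simp add: upt_Suc)
  have "zz p (2*m+1) = m+1" "zz p (2*m+2) = p - (m+1)" by (auto simp: zz_def)
  then show ?case using Suc by (simp add: e)
qed

lemma zig: "odd p \<Longrightarrow> zigzag_seq p = map (zz p) [0..<p]"
proof -
  assume "odd p"
  then have "2 * ((p - 1) div 2) + 1 = p" by presburger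
  then show ?thesis unfolding zigzag_seq_def using zz_list[of p "(p-1) div 2"] by simp
qed

lemma zz_lt: "i < p \<Longrightarrow> zz p i < p"
  by (auto simp: zz_def)

lemma zz_odd: "odd x \<Longrightarrow> x < p \<Longrightarrow> odd p \<Longrightarrow> 1 \<le> zz p x \<and> 2 * zz p x \<le> p - 1 \<and> x = 2 * zz p x - 1"
  unfolding zz_def by auto presburger+

lemma zz_even: "even x \<Longrightarrow> x \<noteq> 0 \<Longrightarrow> x < p \<Longrightarrow> odd p \<Longrightarrow> 2 * zz p x \<ge> p + 1 \<and> zz p x < p \<and> x = 2 * (p - zz p x)"
  unfolding zz_def by auto

lemma zz_inj: assumes "odd p" "i < p" "j < p" "zz p i = zz p j" shows "i = j"
proof -
  have z: "zz p 0 = 0" by (simp add: zz_def)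
  show ?thesis
    using zz_odd[of i p] zz_odd[of j p] zz_even[of i p] zz_even[of j p] assms z
    by (cases "i = 0"; cases "j = 0"; cases "odd i"; cases "odd j") auto
qed

lemma zz_cong: assumes "odd p" "i + 2 < p"
  shows "int p dvd (int (zz p (i+1)) - int (zz p i) - int (i+1) * (int (zz p i) - int (zz p (i+2))))"
proof (cases "i = 0")
  case True
  then show ?thesis using assms by (simp add: zz_def of_nat_diff)
next
  case False
  show ?thesis
  proof (cases "odd i")
    case True
    then obtain j where j: "i = 2*j+1" by (metis oddE)
    have "zz p i = j+1" "zz p (i+1) = p - (j+1)" "zz p (i+2) = j+2" using j by (auto simp: zz_def)
    then show ?thesis using assms j by (simp add: of_nat_diff algebra_simps)
  next
    case f: False
    define j where "j = i div 2 - 1"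
    have j: "i = 2*j+2" using False f unfolding j_def by presburger
    have "zz p i = p - (j+1)" "zz p (i+1) = j+2" "zz p (i+2) = p - (j+2)" using j by (auto simp: zz_def)
    then show ?thesis using assms j by (simp add: of_nat_diff algebra_simps)
  qed
qed

lemma aff_mod: "int p dvd (int ((a*x+b) mod p) - (int a * int x + int b))"
  by (simp add: zmod_int mod_eq_dvd_iff[symmetric])

lemma aff_cong: assumes "int p dvd (int u1 - int u0 - k*(int u0 - int u2))"
  shows "int p dvd (int ((a*u1+b) mod p) - int ((a*u0+b) mod p) - k*(int ((a*u0+b) mod p) - int ((a*u2+b) mod p)))"
proof -
  define e where "e x = int ((a*x+b) mod p) - (int a * int x + int b)" for x
  have d: "int p dvd e x" for x unfolding e_def by (rule aff_mod)
  have "int ((a*u1+b) mod p) - int ((a*u0+b) mod p) - k*(int ((a*u0+b) mod p) - int ((a*u2+b) mod p))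
     = int a * (int u1 - int u0 - k*(int u0 - int u2)) + (e u1 - e u0 - k * (e u0 - e u2))"
    unfolding e_def by (simp add: algebra_simps)
  also have "int p dvd \<dots>"
    by (rule dvd_add[OF dvd_mult[OF assms] dvd_diff[OF dvd_diff[OF d d] dvd_mult[OF dvd_diff[OF d d]]]])
  finally show ?thesis .
qed
lemma small_dvd: assumes "int p dvd x" "\<bar>x\<bar> < int p" shows "x = 0"
proof (rule ccontr)
  assume "x \<noteq> 0"
  then have "\<bar>int p\<bar> \<le> \<bar>x\<bar>" using dvd_imp_le_int assms(1) by blast
  then show False using assms(2) by simp
qed
lemma inv_ex: assumes "prime p" "\<not> int p dvd d" shows "\<exists>y. int p dvd (d*y - 1)"
proof -
  have "coprime (int p) d" using assms by (simp add: prime_imp_coprime prime_nat_int_transfer)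
  then obtain u v where "u * int p + v * d = 1" using bezout_int[of "int p" d] by auto
  then have "d * v - 1 = int p * (-u)" by (simp add: algebra_simps)
  then show ?thesis by (metis dvd_triv_left)
qed

lemma take3: "i + 3 \<le> n \<Longrightarrow> take 3 (drop i (map f [0..<n])) = [f i, f (i+1), f (i+2)]"
proof -
  assume a: "i + 3 \<le> n"
  have "drop i [0..<n] = [i..<n]" by simp
  moreover have "take 3 [i..<n] = [i..<i+3]" using a by (simp only: take_upt)
  moreover have "[i..<i+3] = [i, i+1, i+2]" by (simp add: numeral_3_eq_3)
  ultimately have "take 3 (drop i [0..<n]) = [i, i+1, i+2]" by simp
  then show ?thesis by (simp add: drop_map take_map)
qed


lemma ratio_unique:
  assumes "prime p" "i + 2 < p" "j + 2 < p"
    "int p dvd (X - int (i+1) * Y)" "int p dvd (X - int (j+1) * Y)" "\<not> int p dvd Y"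
  shows "i = j"
proof -
  have pp: "prime (int p)" using assms(1) by (simp add: prime_nat_int_transfer)
  have e: "(int j - int i) * Y = (X - int (i+1)*Y) - (X - int (j+1)*Y)" by (simp add: algebra_simps)
  have "int p dvd (int j - int i) * Y" unfolding e using assms(4,5) by (rule dvd_diff)
  then have "int p dvd (int j - int i)" using pp assms(6) by (simp add: prime_dvd_mult_iff)
  then have "int j - int i = 0" by (rule small_dvd) (use assms in auto)
  then show ?thesis by simp
qed

lemma neq_ndvd: assumes "x < p" "y < p" "x \<noteq> y" shows "\<not> int p dvd (int x - int y)"
proof
  assume "int p dvd (int x - int y)"
  moreover have "\<bar>int x - int y\<bar> < int p" using assms by auto
  ultimately have "int x - int y = 0" by (rule small_dvd)
  then show False using assms by simp
qed

lemma D_nz: "odd p \<Longrightarrow> i + 2 < p \<Longrightarrow> \<not> int p dvd (int (zz p i) - int (zz p (i+2)))"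
  using neq_ndvd[of "zz p i" p "zz p (i+2)"] zz_lt[of i p] zz_lt[of "i+2" p] zz_inj[of p i "i+2"] by auto

lemma aff_elem: "g \<in> aff_group p \<Longrightarrow> \<exists>a b. 1 \<le> a \<and> a < p \<and> b < p \<and> g = (\<lambda>x. (a*x+b) mod p)"
  by (auto simp: aff_group_def)

lemma aff_ndvd:
  assumes "prime p" "1 \<le> a" "a < (p::nat)" "\<not> int p dvd (int x - int y)"
  shows "\<not> int p dvd (int ((a*x+b) mod p) - int ((a*y+b) mod p))"
proof
  assume h: "int p dvd (int ((a*x+b) mod p) - int ((a*y+b) mod p))"
  have pp: "prime (int p)" using assms(1) by (simp add: prime_nat_int_transfer)
  have "int p dvd int a * (int x - int y)"
    using h aff_mod[of p a x b] aff_mod[of p a y b] by algebra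
  then have "int p dvd int a \<or> int p dvd (int x - int y)" using pp by (simp add: prime_dvd_mult_iff)
  moreover have "\<not> int p dvd int a" using neq_ndvd[of a p 0] assms by auto
  ultimately show False using assms(4) by blast
qed

lemma aff_inj:
  assumes "prime p" "1 \<le> a" "a < p" "x < p" "y < p" "(a*x+b) mod p = (a*y+b) mod (p::nat)"
  shows "x = y"
  using aff_ndvd[OF assms(1-3), of x y b] neq_ndvd[of x p y] assms by auto

lemma aff_agree:
  assumes "prime p" "x < p" "y < p" "x \<noteq> y"
    "(a*x+b) mod p = (c*x+d) mod p" "(a*y+b) mod p = (c*y+d) mod p"
  shows "(\<lambda>z. (a*z+b) mod (p::nat)) = (\<lambda>z. (c*z+d) mod p)"
proof
  fix z
  have pp: "prime (int p)" using assms(1) by (simp add: prime_nat_int_transfer)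
  have h1: "int p dvd (int a * int x + int b) - (int c * int x + int d)"
    using arg_cong[OF assms(5), of int] by (simp add: zmod_int mod_eq_dvd_iff)
  have h2: "int p dvd (int a * int y + int b) - (int c * int y + int d)"
    using arg_cong[OF assms(6), of int] by (simp add: zmod_int mod_eq_dvd_iff)
  have "int p dvd (int a - int c) * (int x - int y)" using h1 h2 by algebra
  then have "int p dvd (int a - int c)"
    using pp neq_ndvd[OF assms(2,3,4)] by (simp add: prime_dvd_mult_iff)
  then have "int p dvd (int a * int z + int b) - (int c * int z + int d)" using h1 by algebra
  then have "int ((a*z+b) mod p) = int ((c*z+d) mod p)" by (simp add: zmod_int mod_eq_dvd_iff)
  then show "(a*z+b) mod p = (c*z+d) mod p" by simp
qed

lemma nat_mod_eq:
  assumes "0 \<le> A" "0 \<le> B" "u < p" "int p dvd (A * int x + B - int u)"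
  shows "(nat A * x + nat B) mod p = u"
proof -
  have "int ((nat A * x + nat B) mod p) = (A * int x + B) mod int p" using assms by (simp add: zmod_int)
  also have "\<dots> = int u mod int p" using assms(4) by (simp add: mod_eq_dvd_iff)
  also have "\<dots> = int u" using assms(3) by simp
  finally show ?thesis by simp
qed



lemma exist_triple:
  assumes "prime p" "p > 2" "u0 < p" "u1 < p" "u2 < p" "u0 \<noteq> u1" "u1 \<noteq> u2" "u0 \<noteq> u2"
  shows "\<exists>i a b. i + 2 < p \<and> 1 \<le> a \<and> a < p \<and> b < p \<and> (a * zz p i + b) mod p = u0
          \<and> (a * zz p (i+1) + b) mod p = u1 \<and> (a * zz p (i+2) + b) mod p = u2"
proof -
  have odd: "odd p" using assms(1,2) by (rule prime_odd_nat)
  define D where "D = int u0 - int u2"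
  have nD: "\<not> int p dvd D" unfolding D_def using neq_ndvd assms by auto
  have n01: "\<not> int p dvd (int u1 - int u0)" using neq_ndvd assms by auto
  have n12: "\<not> int p dvd (int u1 - int u2)" using neq_ndvd assms by auto
  obtain dv where dv: "int p dvd (D * dv - 1)" using inv_ex[OF assms(1) nD] by blast
  define r where "r = ((int u1 - int u0) * dv) mod int p"
  have r0: "0 \<le> r" "r < int p" unfolding r_def using assms(2) by auto
  have rd: "int p dvd (r - (int u1 - int u0) * dv)" unfolding r_def
    by (simp add: mod_eq_dvd_iff[symmetric])
  have key: "int p dvd (int u1 - int u0 - r * D)" using rd dv by algebra
  have rn0: "r \<noteq> 0"
  proof
    assume "r = 0" then show False using key n01 by simp
  qed
  have rn1: "r \<noteq> int p - 1"
  proof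
    assume "r = int p - 1"
    then have "int p dvd (int u1 - int u0 + D)" using key by algebra
    then show False using n12 unfolding D_def by simp
  qed
  define i where "i = nat r - 1"
  have ir: "int (i+1) = r" unfolding i_def using r0 rn0 by auto
  have ip: "i + 2 < p" using ir r0 rn1 by linarith
  define E where "E = int (zz p i) - int (zz p (i+2))"
  have nE: "\<not> int p dvd E" unfolding E_def using D_nz[OF odd ip] .
  obtain ev where ev: "int p dvd (E * ev - 1)" using inv_ex[OF assms(1) nE] by blast
  define A where "A = (D * ev) mod int p"
  have A0: "0 \<le> A" "A < int p" unfolding A_def using assms(2) by auto
  have Ad: "int p dvd (A - D * ev)" unfolding A_def by (simp add: mod_eq_dvd_iff[symmetric])
  have An0: "A \<noteq> 0"
  proof
    assume "A = 0"
    then have "int p dvd D" using Ad ev by algebra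
    then show False using nD by simp
  qed
  define B where "B = (int u0 - A * int (zz p i)) mod int p"
  have B0: "0 \<le> B" "B < int p" unfolding B_def using assms(2) by auto
  have Bd: "int p dvd (B - (int u0 - A * int (zz p i)))" unfolding B_def by (simp add: mod_eq_dvd_iff[symmetric])
  have c: "int p dvd (int (zz p (i+1)) - int (zz p i) - r * E)" using zz_cong[OF odd ip] ir unfolding E_def by simp
  have e0: "(nat A * zz p i + nat B) mod p = u0"
  proof (rule nat_mod_eq)
    show "int p dvd A * int (zz p i) + B - int u0" using Bd by algebra
  qed (use A0 B0 assms in auto)
  have e2: "(nat A * zz p (i+2) + nat B) mod p = u2"
  proof (rule nat_mod_eq)
    show "int p dvd A * int (zz p (i + 2)) + B - int u2"
      using Bd Ad ev unfolding D_def E_def by algebra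
  qed (use A0 B0 assms in auto)
  have e1: "(nat A * zz p (i+1) + nat B) mod p = u1"
  proof (rule nat_mod_eq)
    show "int p dvd A * int (zz p (i + 1)) + B - int u1"
      using Bd Ad ev key c unfolding D_def E_def by algebra
  qed (use A0 B0 assms in auto)
  show ?thesis
    by (rule exI[of _ i], rule exI[of _ "nat A"], rule exI[of _ "nat B"])
       (use ip A0 An0 B0 e0 e1 e2 in auto)
qed



lemma triple_aff:
  assumes "prime p" "p > 2" "i + 2 < p" "1 \<le> a" "a < p"
  shows "int p dvd (int ((a*zz p (i+1)+b) mod p) - int ((a*zz p i+b) mod p)
           - int (i+1) * (int ((a*zz p i+b) mod p) - int ((a*zz p (i+2)+b) mod p)))"
    "\<not> int p dvd (int ((a*zz p i+b) mod p) - int ((a*zz p (i+2)+b) mod p))"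
proof -
  have odd: "odd p" using assms(1,2) by (rule prime_odd_nat)
  show "int p dvd (int ((a*zz p (i+1)+b) mod p) - int ((a*zz p i+b) mod p)
           - int (i+1) * (int ((a*zz p i+b) mod p) - int ((a*zz p (i+2)+b) mod p)))"
    by (rule aff_cong[OF zz_cong[OF odd assms(3)]])
  show "\<not> int p dvd (int ((a*zz p i+b) mod p) - int ((a*zz p (i+2)+b) mod p))"
    by (rule aff_ndvd[OF assms(1,4,5) D_nz[OF odd assms(3)]])
qed

theorem theorem4p2:
  fixes p :: nat
  assumes "prime p" and "p > 2"
  shows "sequencing (aff_group p) {0..<p} 2 (zigzag_seq p)
         \<and> (\<exists>P :: nat list set. perm_design p 3 {0..<p} P)"
proof -
  have odd: "odd p" using assms by (rule prime_odd_nat)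
  define xs where "xs = zigzag_seq p"
  have xs: "xs = map (zz p) [0..<p]" unfolding xs_def using odd by (rule zig)
  have len: "length xs = p" using xs by simp
  have inj: "inj_on (zz p) {0..<p}" using zz_inj[OF odd] by (auto simp: inj_on_def)
  have setxs: "set xs = {0..<p}"
  proof -
    have s: "set xs = zz p ` {0..<p}" using xs by simp
    have "zz p ` {0..<p} \<subseteq> {0..<p}" using zz_lt by auto
    moreover have "card (zz p ` {0..<p}) = card {0..<p::nat}" using inj by (simp add: card_image)
    ultimately show ?thesis using s by (simp add: card_subset_eq)
  qed
  have dist: "distinct xs" using xs inj by (simp add: distinct_map)
  have tr: "take 3 (drop i xs) = [zz p i, zz p (i+1), zz p (i+2)]" if "i + 3 \<le> p" for i
    using take3[OF that] xs by simp
  have seq: "sequencing (aff_group p) {0..<p} 2 xs"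
    unfolding sequencing_def
  proof (intro conjI dist setxs allI impI)
    fix i j assume i: "i < length xs - 2" and j: "j < length xs - 2" and ij: "i \<noteq> j"
    have ip: "i + 2 < p" "i + 3 \<le> p" and jp: "j + 2 < p" "j + 3 \<le> p" using i j len by auto
    show "\<not> same_orbit (aff_group p) (take (2 + 1) (drop i xs)) (take (2 + 1) (drop j xs))"
    proof
      assume "same_orbit (aff_group p) (take (2 + 1) (drop i xs)) (take (2 + 1) (drop j xs))"
      then obtain g where g: "g \<in> aff_group p"
        and m: "map g [zz p i, zz p (i+1), zz p (i+2)] = [zz p j, zz p (j+1), zz p (j+2)]"
        unfolding same_orbit_def using tr[OF ip(2)] tr[OF jp(2)] by auto
      obtain a b where ab: "1 \<le> a" "a < p" "b < p" "g = (\<lambda>x. (a*x+b) mod p)"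
        using aff_elem[OF g] by blast
      have gg: "(a*zz p i+b) mod p = zz p j" "(a*zz p (i+1)+b) mod p = zz p (j+1)"
        "(a*zz p (i+2)+b) mod p = zz p (j+2)" using m ab(4) by auto
      have h1: "int p dvd (int (zz p (j+1)) - int (zz p j) - int (i+1) * (int (zz p j) - int (zz p (j+2))))"
        using triple_aff(1)[OF assms ip(1) ab(1,2), of b] unfolding gg .
      show False using ratio_unique[OF assms(1) ip(1) jp(1) h1 zz_cong[OF odd jp(1)] D_nz[OF odd jp(1)]] ij
        by simp
    qed
  qed
  define F where "F = (\<lambda>(a::nat,b::nat). map (\<lambda>x. (a*x+b) mod p) xs)"
  define P where "P = F ` ({1..<p} \<times> {0..<p})"
  have x0: "xs ! 0 = 0" and x1: "xs ! 1 = 1" using xs assms(2) by (auto simp: zz_def)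
  have injF: "inj_on F ({1..<p} \<times> {0..<p})"
  proof (rule inj_onI, clarify)
    fix a b c d assume a: "a \<in> {1..<p}" "b \<in> {0..<p}" "c \<in> {1..<p}" "d \<in> {0..<p}"
      and e: "F (a, b) = F (c, d)"
    have "F (a,b) ! 0 = F (c,d) ! 0" "F (a,b) ! 1 = F (c,d) ! 1" using e by auto
    then have e0: "b mod p = d mod p" and e1: "(a + b) mod p = (c + d) mod p"
      using x0 x1 len assms(2) unfolding F_def by auto
    have bd: "b = d" using e0 a by simp
    have "(1*a + b) mod p = (1*c+b) mod p" using e1 bd by simp
    then have "a = c" using aff_inj[OF assms(1), of 1 a c b] a assms(2) by auto
    then show "a = c \<and> b = d" using bd by simp
  qed
  have Pmem: "\<exists>a b. a \<in> {1..<p} \<and> b \<in> {0..<p} \<and> \<pi> = map (\<lambda>x. (a*x+b) mod p) xs"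
    if "\<pi> \<in> P" for \<pi>
  proof -
    from that obtain q where q: "q \<in> {1..<p} \<times> {0..<p}" "\<pi> = F q" unfolding P_def by auto
    obtain a b where "q = (a, b)" by (cases q)
    then show ?thesis using q unfolding F_def by auto
  qed
  have memP: "distinct \<pi> \<and> set \<pi> = {0..<p}" if piP: "\<pi> \<in> P" for \<pi>
  proof -
    obtain a b where a: "a \<in> {1..<p}" "b \<in> {0..<p}" and pi: "\<pi> = map (\<lambda>x. (a*x+b) mod p) xs"
      using Pmem[OF piP] by blast
    have ig: "inj_on (\<lambda>x. (a*x+b) mod p) {0..<p}"
    proof (rule inj_onI)
      fix x y assume "x \<in> {0..<p}" "y \<in> {0..<p}" "(a*x+b) mod p = (a*y+b) mod p"
      then show "x = y" using aff_inj[OF assms(1), of a x y b] a by auto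
    qed
    have "(\<lambda>x. (a*x+b) mod p) ` {0..<p} \<subseteq> {0..<p}" using assms(2) by auto
    moreover have "card ((\<lambda>x. (a*x+b) mod p) ` {0..<p}) = card {0..<p}" using ig by (simp add: card_image)
    ultimately have "(\<lambda>x. (a*x+b) mod p) ` {0..<p} = {0..<p}" by (simp add: card_subset_eq)
    then show ?thesis using pi ig dist setxs by (simp add: distinct_map)
  qed
  have cnt: "card {(\<pi>, i). \<pi> \<in> P \<and> i + 3 \<le> length \<pi> \<and> take 3 (drop i \<pi>) = u} = 1"
    if u: "distinct u \<and> length u = 3 \<and> set u \<subseteq> {0..<p}" for u
  proof -
    obtain u0 u1 u2 where uu: "u = [u0, u1, u2]" using u by (auto simp: numeral_3_eq_3 length_Suc_conv)
    have ub: "u0 < p" "u1 < p" "u2 < p" "u0 \<noteq> u1" "u1 \<noteq> u2" "u0 \<noteq> u2" using u uu by auto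
    obtain i a b where iab: "i + 2 < p" "1 \<le> a" "a < p" "b < p" "(a * zz p i + b) mod p = u0"
      "(a * zz p (i+1) + b) mod p = u1" "(a * zz p (i+2) + b) mod p = u2"
      using exist_triple[OF assms ub] by blast
    have nU: "\<not> int p dvd (int u0 - int u2)" using neq_ndvd ub by auto
    have rI: "int p dvd (int u1 - int u0 - int (i+1) * (int u0 - int u2))"
      using triple_aff(1)[OF assms iab(1,2,3), of b] unfolding iab(5,6,7) .
    have tk: "take 3 (drop j (map h xs)) = [h (zz p j), h (zz p (j+1)), h (zz p (j+2))]" if "j + 3 \<le> p" for j h
      using take3[OF that, of "h \<circ> zz p"] xs by (simp add: map_map)
    have "{(\<pi>, j). \<pi> \<in> P \<and> j + 3 \<le> length \<pi> \<and> take 3 (drop j \<pi>) = u} = {(F (a, b), i)}"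
    proof (rule set_eqI, clarify, rule iffI)
      fix \<pi> j assume "(\<pi>, j) \<in> {(\<pi>, j). \<pi> \<in> P \<and> j + 3 \<le> length \<pi> \<and> take 3 (drop j \<pi>) = u}"
      then have pP: "\<pi> \<in> P" and jl: "j + 3 \<le> length \<pi>" and tu: "take 3 (drop j \<pi>) = u" by auto
      obtain c d where cd: "c \<in> {1..<p}" "d \<in> {0..<p}" and pi: "\<pi> = map (\<lambda>x. (c*x+d) mod p) xs"
        using Pmem[OF pP] by blast
      have jp: "j + 3 \<le> p" using jl pi len by simp
      have hh: "(c * zz p j + d) mod p = u0" "(c * zz p (j+1) + d) mod p = u1" "(c * zz p (j+2) + d) mod p = u2"
        using tu tk[OF jp, of "\<lambda>x. (c*x+d) mod p"] pi uu by auto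
      have jp2: "j + 2 < p" using jp by simp
      have cd1: "1 \<le> c" "c < p" using cd by auto
      have rJ: "int p dvd (int u1 - int u0 - int (j+1) * (int u0 - int u2))"
        using triple_aff(1)[OF assms jp2 cd1, of d] unfolding hh .
      have ji: "i = j" using ratio_unique[OF assms(1) iab(1) _ rI rJ nU] jp by simp
      have "(\<lambda>z. (c*z+d) mod p) = (\<lambda>z. (a*z+b) mod p)"
      proof (rule aff_agree[OF assms(1)])
        show "zz p i < p" "zz p (i+2) < p" using zz_lt iab(1) by auto
        show "zz p i \<noteq> zz p (i+2)" using zz_inj[OF odd, of i "i+2"] iab(1) by auto
        show "(c * zz p i + d) mod p = (a * zz p i + b) mod p" using hh(1)[folded ji] iab(5) by simp
        show "(c * zz p (i+2) + d) mod p = (a * zz p (i+2) + b) mod p" using hh(3)[folded ji] iab(7) by simp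
      qed
      then show "(\<pi>, j) \<in> {(F (a, b), i)}" using pi ji unfolding F_def by simp
    next
      fix \<pi> j assume "(\<pi>, j) \<in> {(F (a, b), i)}"
      then have e: "\<pi> = F (a, b)" "j = i" by auto
      have "\<pi> \<in> P" unfolding P_def e using iab by auto
      moreover have "j + 3 \<le> length \<pi>" using e iab len unfolding F_def by simp
      moreover have "take 3 (drop j \<pi>) = u"
        using tk[of i "\<lambda>x. (a*x+b) mod p"] e iab uu unfolding F_def by simp
      ultimately show "(\<pi>, j) \<in> {(\<pi>, j). \<pi> \<in> P \<and> j + 3 \<le> length \<pi> \<and> take 3 (drop j \<pi>) = u}" by simp
    qed
    then show ?thesis by simp
  qed
  have cardP: "card P = (\<Prod>i<3 - 1. p - i)"
  proof -
    have "card P = (p - 1) * p" unfolding P_def using injF by (simp add: card_image)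
    also have "\<dots> = (\<Prod>i<3 - 1. p - i)" by (simp add: numeral_3_eq_3 lessThan_Suc)
    finally show ?thesis .
  qed
  have "perm_design p 3 {0..<p} P"
    unfolding perm_design_def
  proof (intro conjI allI impI ballI)
    show "finite {0..<p}" by simp
    show "card {0..<p} = p" by simp
    show "finite P" unfolding P_def by simp
    show "card P = (\<Prod>i<3 - 1. p - i)" by (rule cardP)
  qed (use memP cnt in blast)+
  then show ?thesis using seq xs_def by blast
qed

end
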